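(* Let $G$ be an undirected graph on $n$ vertices whose complement $\overline{G}$ is nonempty (has at least one edge). Then $\beta(G)=2$ if and only if $\overline{G}$ is bipartite.
   Context: For an undirected graph $G$ on vertex set $[n]$, consider the index coding problem: a server holds messages $x_1,\dots,x_n\in\Sigma$ ($|\Sigma|>1$), receiver $i$ wants $x_i$ and knows $x_j$ for every neighbor $j$ of $i$. A solution is an encoding $\mathcal{E}:\Sigma^n\to\Sigma_P$ from which each receiver can recover its message given its side information, for all message values. $\beta_t(G)$ is the minimum of $\lceil\log_2|\Sigma_P|\rceil$ over solutions with $|\Sigma|=2^t$, and $\beta(G)=\lim_t\beta_t(G)/t=\inf_t\beta_t(G)/t$. *)

theory Defs
  imports "HOL-Library.FuncSet" Complex_Main
begin

text \<open>A graph on vertex set [n] = {0..<n} is given by an edge relation E, assumed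
symmetric and irreflexive on {0..<n}.\<close>

definition nbrs :: "nat \<Rightarrow> (nat \<Rightarrow> nat \<Rightarrow> bool) \<Rightarrow> nat \<Rightarrow> nat set" where
  "nbrs n E i = {j. j < n \<and> E i j}"

definition msgs :: "nat \<Rightarrow> nat \<Rightarrow> (nat \<Rightarrow> nat) set" where
  "msgs n t = {0..<n} \<rightarrow>\<^sub>E {0..<2^t}"

definition is_index_code ::
  "nat \<Rightarrow> (nat \<Rightarrow> nat \<Rightarrow> bool) \<Rightarrow> nat \<Rightarrow> nat set \<Rightarrow> ((nat \<Rightarrow> nat) \<Rightarrow> nat) \<Rightarrow> bool" where
  "is_index_code n E t P enc \<longleftrightarrow> finite P \<and> enc ` msgs n t \<subseteq> P \<and>
     (\<exists>dec :: nat \<Rightarrow> nat \<Rightarrow> (nat \<Rightarrow> nat) \<Rightarrow> nat.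
        \<forall>x \<in> msgs n t. \<forall>i < n. dec i (enc x) (restrict x (nbrs n E i)) = x i)"

definition beta_t :: "nat \<Rightarrow> (nat \<Rightarrow> nat \<Rightarrow> bool) \<Rightarrow> nat \<Rightarrow> nat" where
  "beta_t n E t = (LEAST k. \<exists>P enc. is_index_code n E t P enc \<and> k = nat \<lceil>log 2 (card P)\<rceil>)"

text \<open>beta(G) = inf over t >= 1 of beta_t(G)/t (equal to the limit).\<close>
definition beta :: "nat \<Rightarrow> (nat \<Rightarrow> nat \<Rightarrow> bool) \<Rightarrow> real" where
  "beta n E = (INF t\<in>{1..}. real (beta_t n E t) / real t)"

definition bipartite_on :: "nat set \<Rightarrow> (nat \<Rightarrow> nat \<Rightarrow> bool) \<Rightarrow> bool" where
  "bipartite_on V R \<longleftrightarrow> (\<exists>A B. A \<union> B = V \<and> A \<inter> B = {} \<and>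
     (\<forall>u\<in>V. \<forall>v\<in>V. R u v \<longrightarrow> (u \<in> A \<and> v \<in> B) \<or> (u \<in> B \<and> v \<in> A)))"

definition compl_graph :: "(nat \<Rightarrow> nat \<Rightarrow> bool) \<Rightarrow> nat \<Rightarrow> nat \<Rightarrow> bool" where
  "compl_graph E u v \<longleftrightarrow> u \<noteq> v \<and> \<not> E u v"

end

theory Submission
  imports Defs "HOL-Library.Countable_Set"
begin

definition cnt :: "'a set \<Rightarrow> ('a \<Rightarrow> 'b) \<Rightarrow> 'a \<Rightarrow> nat" where
  "cnt I \<phi> x = card {y\<in>I. \<phi> y = \<phi> x}"

definition ent :: "'a set \<Rightarrow> ('a \<Rightarrow> 'b) \<Rightarrow> real" where
  "ent I \<phi> = (\<Sum>x\<in>I. ln (real (card I) / real (cnt I \<phi> x))) / real (card I)"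

lemma cnt_pos: "finite I \<Longrightarrow> x \<in> I \<Longrightarrow> cnt I \<phi> x > 0"
  unfolding cnt_def by (subst card_gt_0_iff) auto

lemma cnt_le: "finite I \<Longrightarrow> cnt I \<phi> x \<le> card I"
  unfolding cnt_def by (rule card_mono) auto

lemma fiber_sum:
  assumes "finite I"
  shows "(\<Sum>x\<in>I. g (\<phi> x) / real (cnt I \<phi> x)) = (\<Sum>v\<in>\<phi>`I. g v)"
proof -
  have "(\<Sum>x\<in>I. g (\<phi> x) / real (cnt I \<phi> x)) =
        (\<Sum>v\<in>\<phi>`I. \<Sum>x\<in>{x\<in>I. \<phi> x = v}. g (\<phi> x) / real (cnt I \<phi> x))"
    by (rule sum.image_gen[OF assms])
  also have "\<dots> = (\<Sum>v\<in>\<phi>`I. g v)"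
  proof (rule sum.cong[OF refl])
    fix v assume v: "v \<in> \<phi>`I"
    have "(\<Sum>x\<in>{x\<in>I. \<phi> x = v}. g (\<phi> x) / real (cnt I \<phi> x))
        = (\<Sum>x\<in>{x\<in>I. \<phi> x = v}. g v / real (card {x\<in>I. \<phi> x = v}))"
      by (rule sum.cong) (auto simp: cnt_def)
    also have "\<dots> = g v"
    proof -
      have "card {x\<in>I. \<phi> x = v} > 0" using v assms by (subst card_gt_0_iff) auto
      then show ?thesis by simp
    qed
    finally show "(\<Sum>x\<in>{x\<in>I. \<phi> x = v}. g (\<phi> x) / real (cnt I \<phi> x)) = g v" .
  qed
  finally show ?thesis .
qed

lemma ent_nonneg:
  assumes "finite I"
  shows "0 \<le> ent I \<phi>"
proof -
  have "0 \<le> (\<Sum>x\<in>I. ln (real (card I) / real (cnt I \<phi> x)))"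
  proof (rule sum_nonneg)
    fix x assume x: "x \<in> I"
    have "real (cnt I \<phi> x) > 0" using cnt_pos[OF assms x] by simp
    moreover have "real (cnt I \<phi> x) \<le> real (card I)" using cnt_le[OF assms] by simp
    ultimately show "0 \<le> ln (real (card I) / real (cnt I \<phi> x))" by simp
  qed
  then show ?thesis unfolding ent_def by simp
qed

lemma ent_cong:
  assumes "\<And>x y. x \<in> I \<Longrightarrow> y \<in> I \<Longrightarrow> \<phi> x = \<phi> y \<longleftrightarrow> \<psi> x = \<psi> y"
  shows "ent I \<phi> = ent I \<psi>"
proof -
  have "cnt I \<phi> x = cnt I \<psi> x" if "x \<in> I" for x
    unfolding cnt_def using assms that by (metis (mono_tags, lifting) mem_Collect_eq)
  then show ?thesis unfolding ent_def by (auto intro!: sum.cong arg_cong[where f="\<lambda>s. s / real (card I)"])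
qed

lemma ent_mono:
  assumes fin: "finite I"
    and det: "\<And>x y. x \<in> I \<Longrightarrow> y \<in> I \<Longrightarrow> \<psi> x = \<psi> y \<Longrightarrow> \<phi> x = \<phi> y"
  shows "ent I \<phi> \<le> ent I \<psi>"
proof -
  have "ln (real (card I) / real (cnt I \<phi> x)) \<le> ln (real (card I) / real (cnt I \<psi> x))" if x: "x \<in> I" for x
  proof -
    have "cnt I \<psi> x \<le> cnt I \<phi> x" unfolding cnt_def
      by (rule card_mono) (use fin in simp, use det x in blast)
    moreover have "cnt I \<psi> x > 0" using cnt_pos[OF fin x] .
    moreover have "card I > 0" using fin x by (auto simp: card_gt_0_iff)
    ultimately show ?thesis by (simp add: frac_le)
  qed
  then have "(\<Sum>x\<in>I. ln (real (card I) / real (cnt I \<phi> x))) \<le> (\<Sum>x\<in>I. ln (real (card I) / real (cnt I \<psi> x)))"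
    by (rule sum_mono)
  then show ?thesis unfolding ent_def by (simp add: divide_right_mono)
qed

lemma ent_inj:
  assumes "finite I" "inj_on \<phi> I"
  shows "ent I \<phi> = ln (real (card I))"
proof (cases "I = {}")
  case True then show ?thesis by (simp add: ent_def)
next
  case False
  have "cnt I \<phi> x = 1" if "x \<in> I" for x
  proof -
    have "{y\<in>I. \<phi> y = \<phi> x} = {x}" using assms(2) that by (auto simp: inj_on_def)
    then show ?thesis by (simp add: cnt_def)
  qed
  then have "ent I \<phi> = (\<Sum>x\<in>I. ln (real (card I))) / real (card I)"
    unfolding ent_def by simp
  also have "\<dots> = ln (real (card I))" using False assms(1) by simp
  finally show ?thesis .
qed

lemma ent_le_card:
  assumes fin: "finite I" and ne: "I \<noteq> {}"
  shows "ent I \<phi> \<le> ln (real (card (\<phi> ` I)))"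
proof -
  let ?N = "real (card I)" and ?R = "real (card (\<phi> ` I))"
  have N: "?N > 0" using fin ne by (simp add: card_gt_0_iff)
  have R: "?R > 0" using fin ne by (simp add: card_gt_0_iff)
  have "ln (?N / real (cnt I \<phi> x)) - ln ?R \<le> ?N / ?R * (1 / real (cnt I \<phi> x)) - 1" if x: "x \<in> I" for x
  proof -
    have c: "real (cnt I \<phi> x) > 0" using cnt_pos[OF fin x] by simp
    have "ln (?N / real (cnt I \<phi> x)) - ln ?R = ln (?N / real (cnt I \<phi> x) / ?R)"
      using N R c by (simp add: ln_div ln_mult)
    also have "\<dots> \<le> ?N / real (cnt I \<phi> x) / ?R - 1"
      by (rule ln_le_minus_one) (use N R c in simp)
    also have "?N / real (cnt I \<phi> x) / ?R = ?N / ?R * (1 / real (cnt I \<phi> x))" by simp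
    finally show ?thesis .
  qed
  then have "(\<Sum>x\<in>I. ln (?N / real (cnt I \<phi> x)) - ln ?R) \<le> (\<Sum>x\<in>I. ?N / ?R * (1 / real (cnt I \<phi> x)) - 1)"
    by (rule sum_mono)
  also have "\<dots> = ?N / ?R * (\<Sum>x\<in>I. 1 / real (cnt I \<phi> x)) - ?N"
    by (simp add: sum_subtractf sum_distrib_left)
  also have "(\<Sum>x\<in>I. 1 / real (cnt I \<phi> x)) = ?R"
    using fiber_sum[OF fin, of "\<lambda>_. 1" \<phi>] by simp
  finally have "(\<Sum>x\<in>I. ln (?N / real (cnt I \<phi> x))) - ?N * ln ?R \<le> 0"
    using R by (simp add: sum_subtractf)
  then have "(\<Sum>x\<in>I. ln (?N / real (cnt I \<phi> x))) \<le> ln ?R * ?N" by (simp add: algebra_simps)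
  then show ?thesis unfolding ent_def using N by (simp add: divide_le_eq)
qed

lemma card_filter_sum:
  "finite I \<Longrightarrow> real (card {y\<in>I. P y}) = (\<Sum>y\<in>I. if P y then 1 else 0)"
proof -
  assume f: "finite I"
  have "real (card {y\<in>I. P y}) = (\<Sum>y\<in>{y\<in>I. P y}. (1::real))" by simp
  also have "\<dots> = (\<Sum>y\<in>I. if P y then 1 else 0)" by (rule sum.inter_filter[OF f])
  finally show ?thesis .
qed

lemma marg_sum:
  assumes f: "finite I"
  shows "(\<Sum>a\<in>\<phi>`I. real (card {y\<in>I. \<phi> y = a \<and> Q y})) = real (card {y\<in>I. Q y})"
proof -
  have "(\<Sum>a\<in>\<phi>`I. real (card {y\<in>I. \<phi> y = a \<and> Q y}))
      = (\<Sum>a\<in>\<phi>`I. \<Sum>y\<in>I. if \<phi> y = a \<and> Q y then 1 else 0)"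
    using f by (simp add: card_filter_sum)
  also have "\<dots> = (\<Sum>y\<in>I. \<Sum>a\<in>\<phi>`I. if \<phi> y = a \<and> Q y then 1 else 0)"
    by (rule sum.swap)
  also have "\<dots> = (\<Sum>y\<in>I. if Q y then 1 else 0)"
  proof (rule sum.cong[OF refl])
    fix y assume y: "y \<in> I"
    have "(\<Sum>a\<in>\<phi>`I. if \<phi> y = a \<and> Q y then (1::real) else 0) = (\<Sum>a\<in>\<phi>`I. if \<phi> y = a then (if Q y then 1 else 0) else 0)"
      by (rule sum.cong) auto
    also have "\<dots> = (if Q y then 1 else 0)" using f y by (subst sum.delta') auto
    finally show "(\<Sum>a\<in>\<phi>`I. if \<phi> y = a \<and> Q y then (1::real) else 0) = (if Q y then 1 else 0)" .
  qed
  also have "\<dots> = real (card {y\<in>I. Q y})" using f by (simp add: card_filter_sum)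
  finally show ?thesis .
qed

lemma ent_submod:
  assumes fin: "finite I" and ne: "I \<noteq> {}"
  shows "ent I (\<lambda>x. (\<phi> x, \<psi> x, \<chi> x)) + ent I \<chi> \<le> ent I (\<lambda>x. (\<phi> x, \<chi> x)) + ent I (\<lambda>x. (\<psi> x, \<chi> x))"
proof -
  define N where "N = real (card I)"
  have N: "N > 0" using fin ne by (simp add: N_def card_gt_0_iff)
  define J where "J = (\<lambda>x. (\<phi> x, \<psi> x, \<chi> x))"
  define Cxz where "Cxz a z = real (card {y\<in>I. \<phi> y = a \<and> \<chi> y = z})" for a z
  define Cyz where "Cyz b z = real (card {y\<in>I. \<psi> y = b \<and> \<chi> y = z})" for b z
  define Cz where "Cz z = real (card {y\<in>I. \<chi> y = z})" for z
  define g where "g v = (case v of (a, b, z) \<Rightarrow> Cxz a z * Cyz b z / Cz z)" for v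
  have cxz: "real (cnt I (\<lambda>x. (\<phi> x, \<chi> x)) x) = Cxz (\<phi> x) (\<chi> x)" for x
    unfolding cnt_def Cxz_def by simp
  have cyz: "real (cnt I (\<lambda>x. (\<psi> x, \<chi> x)) x) = Cyz (\<psi> x) (\<chi> x)" for x
    unfolding cnt_def Cyz_def by simp
  have cz: "real (cnt I \<chi> x) = Cz (\<chi> x)" for x
    unfolding cnt_def Cz_def by simp
  have Czpos: "Cz z > 0" if "z \<in> \<chi>`I" for z
    using that fin unfolding Cz_def by (auto simp: card_gt_0_iff)
  have tm: "ln (N / real (cnt I J x)) + ln (N / real (cnt I \<chi> x))
      - ln (N / real (cnt I (\<lambda>x. (\<phi> x, \<chi> x)) x)) - ln (N / real (cnt I (\<lambda>x. (\<psi> x, \<chi> x)) x))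
      \<le> g (J x) / real (cnt I J x) - 1" if x: "x \<in> I" for x
  proof -
    define a where "a = real (cnt I J x)"
    define b where "b = real (cnt I \<chi> x)"
    define c where "c = real (cnt I (\<lambda>x. (\<phi> x, \<chi> x)) x)"
    define d where "d = real (cnt I (\<lambda>x. (\<psi> x, \<chi> x)) x)"
    have a: "a > 0" and b: "b > 0" and c: "c > 0" and d: "d > 0"
      using cnt_pos[OF fin x, of J] cnt_pos[OF fin x, of \<chi>] cnt_pos[OF fin x, of "\<lambda>x. (\<phi> x, \<chi> x)"]
        cnt_pos[OF fin x, of "\<lambda>x. (\<psi> x, \<chi> x)"] unfolding a_def b_def c_def d_def by auto
    have "ln (N / a) + ln (N / b) - ln (N / c) - ln (N / d) = ln (c * d / (a * b))"
    proof -
      have "ln (c * d / (a * b)) = ln (c * d) - ln (a * b)" by (rule ln_divide_pos) (use a b c d in auto)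
      moreover have "ln (c * d) = ln c + ln d" by (rule ln_mult_pos[OF c d])
      moreover have "ln (a * b) = ln a + ln b" by (rule ln_mult_pos[OF a b])
      moreover have "ln (N / a) = ln N - ln a" by (rule ln_divide_pos[OF N a])
      moreover have "ln (N / b) = ln N - ln b" by (rule ln_divide_pos[OF N b])
      moreover have "ln (N / c) = ln N - ln c" by (rule ln_divide_pos[OF N c])
      moreover have "ln (N / d) = ln N - ln d" by (rule ln_divide_pos[OF N d])
      ultimately show ?thesis by linarith
    qed
    also have "\<dots> \<le> c * d / (a * b) - 1" by (rule ln_le_minus_one) (use a b c d in simp)
    also have "c * d / (a * b) = g (J x) / a"
      unfolding g_def J_def c_def d_def b_def using cxz cyz cz by simp
    finally show ?thesis unfolding a_def b_def c_def d_def .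
  qed
  have gnn: "g v \<ge> 0" for v
    unfolding g_def Cxz_def Cyz_def Cz_def by (auto split: prod.splits)
  have "(\<Sum>x\<in>I. g (J x) / real (cnt I J x)) = (\<Sum>v\<in>J`I. g v)"
    by (rule fiber_sum[OF fin])
  also have "\<dots> \<le> (\<Sum>v\<in>\<phi>`I \<times> (\<psi>`I \<times> \<chi>`I). g v)"
    by (rule sum_mono2) (use fin gnn in \<open>auto simp: J_def\<close>)
  also have "\<dots> = (\<Sum>a\<in>\<phi>`I. \<Sum>b\<in>\<psi>`I. \<Sum>z\<in>\<chi>`I. Cxz a z * Cyz b z / Cz z)"
    by (simp add: sum.cartesian_product g_def)
  also have "\<dots> = (\<Sum>z\<in>\<chi>`I. \<Sum>a\<in>\<phi>`I. \<Sum>b\<in>\<psi>`I. Cxz a z * Cyz b z / Cz z)"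
    by (subst sum.swap) (subst (2) sum.swap, rule refl)
  also have "\<dots> = (\<Sum>z\<in>\<chi>`I. (\<Sum>a\<in>\<phi>`I. Cxz a z) * (\<Sum>b\<in>\<psi>`I. Cyz b z) / Cz z)"
    by (simp only: sum_product sum_divide_distrib)
  also have "\<dots> = (\<Sum>z\<in>\<chi>`I. Cz z)"
  proof (rule sum.cong[OF refl])
    fix z assume z: "z \<in> \<chi>`I"
    have "(\<Sum>a\<in>\<phi>`I. Cxz a z) = Cz z" unfolding Cxz_def Cz_def by (rule marg_sum[OF fin])
    moreover have "(\<Sum>b\<in>\<psi>`I. Cyz b z) = Cz z" unfolding Cyz_def Cz_def by (rule marg_sum[OF fin])
    ultimately show "(\<Sum>a\<in>\<phi>`I. Cxz a z) * (\<Sum>b\<in>\<psi>`I. Cyz b z) / Cz z = Cz z"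
      using Czpos[OF z] by simp
  qed
  also have "\<dots> = N"
    using marg_sum[OF fin, of \<chi> "\<lambda>_. True"] unfolding Cz_def N_def by simp
  finally have S: "(\<Sum>x\<in>I. g (J x) / real (cnt I J x)) \<le> N" .
  have "(\<Sum>x\<in>I. ln (N / real (cnt I J x)) + ln (N / real (cnt I \<chi> x))
      - ln (N / real (cnt I (\<lambda>x. (\<phi> x, \<chi> x)) x)) - ln (N / real (cnt I (\<lambda>x. (\<psi> x, \<chi> x)) x)))
      \<le> (\<Sum>x\<in>I. g (J x) / real (cnt I J x) - 1)"
    by (rule sum_mono) (rule tm)
  also have "\<dots> = (\<Sum>x\<in>I. g (J x) / real (cnt I J x)) - N"
    by (simp add: sum_subtractf N_def)
  finally have "(\<Sum>x\<in>I. ln (N / real (cnt I J x)) + ln (N / real (cnt I \<chi> x))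
      - ln (N / real (cnt I (\<lambda>x. (\<phi> x, \<chi> x)) x)) - ln (N / real (cnt I (\<lambda>x. (\<psi> x, \<chi> x)) x))) \<le> 0"
    using S by simp
  then have "(\<Sum>x\<in>I. ln (N / real (cnt I J x))) + (\<Sum>x\<in>I. ln (N / real (cnt I \<chi> x)))
      - (\<Sum>x\<in>I. ln (N / real (cnt I (\<lambda>x. (\<phi> x, \<chi> x)) x))) - (\<Sum>x\<in>I. ln (N / real (cnt I (\<lambda>x. (\<psi> x, \<chi> x)) x))) \<le> 0"
    by (simp add: sum.distrib sum_subtractf)
  then show ?thesis unfolding ent_def J_def[symmetric] N_def[symmetric] using N
    by (simp add: add_divide_distrib[symmetric] diff_divide_distrib[symmetric] divide_le_eq)
qed


lemma cnt_const: "cnt I (\<lambda>_. c) x = card I"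
  unfolding cnt_def by simp

lemma ent_const: "ent I (\<lambda>_. c) = 0"
  unfolding ent_def cnt_const by (cases "card I = 0") simp_all

definition hh :: "(nat \<Rightarrow> nat) set \<Rightarrow> nat set \<Rightarrow> real" where
  "hh I S = ent I (\<lambda>x. restrict x S)"

lemma restr_eq: "restrict x S = restrict y S \<longleftrightarrow> (\<forall>i\<in>S. x i = y i)"
  by (auto simp: restrict_def fun_eq_iff)

lemma hh_empty: "hh I {} = 0"
proof -
  have "hh I {} = ent I (\<lambda>_. (\<lambda>_. undefined) :: nat \<Rightarrow> nat)"
    unfolding hh_def by (rule ent_cong) (simp add: restr_eq)
  then show ?thesis by (simp add: ent_const)
qed

lemma hh_nonneg: "finite I \<Longrightarrow> 0 \<le> hh I S"
  unfolding hh_def by (rule ent_nonneg)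

lemma hh_mono: "finite I \<Longrightarrow> A \<subseteq> B \<Longrightarrow> hh I A \<le> hh I B"
  unfolding hh_def by (rule ent_mono) (auto simp: restr_eq)

lemma hh_submod:
  assumes fin: "finite I" and ne: "I \<noteq> {}"
  shows "hh I (A \<union> B) + hh I (A \<inter> B) \<le> hh I A + hh I B"
proof -
  let ?p = "\<lambda>x::nat\<Rightarrow>nat. restrict x (A - B)"
  let ?s = "\<lambda>x::nat\<Rightarrow>nat. restrict x (B - A)"
  let ?c = "\<lambda>x::nat\<Rightarrow>nat. restrict x (A \<inter> B)"
  have "ent I (\<lambda>x. (?p x, ?s x, ?c x)) + ent I ?c \<le> ent I (\<lambda>x. (?p x, ?c x)) + ent I (\<lambda>x. (?s x, ?c x))"
    by (rule ent_submod[OF fin ne])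
  moreover have "ent I (\<lambda>x. (?p x, ?s x, ?c x)) = hh I (A \<union> B)"
    unfolding hh_def by (rule ent_cong) (auto simp: restr_eq)
  moreover have "ent I (\<lambda>x. (?p x, ?c x)) = hh I A"
    unfolding hh_def by (rule ent_cong) (auto simp: restr_eq)
  moreover have "ent I (\<lambda>x. (?s x, ?c x)) = hh I B"
    unfolding hh_def by (rule ent_cong) (auto simp: restr_eq)
  moreover have "ent I ?c = hh I (A \<inter> B)" unfolding hh_def ..
  ultimately show ?thesis by simp
qed

lemma hh_sub:
  assumes fin: "finite I" and ne: "I \<noteq> {}"
  shows "hh I (A \<union> B) \<le> hh I A + hh I B"
  using hh_submod[OF fin ne, of A B] hh_nonneg[OF fin, of "A \<inter> B"] by simp

lemma hh_dec:
  assumes "\<And>x y. x \<in> I \<Longrightarrow> y \<in> I \<Longrightarrow> (\<forall>j\<in>T. x j = y j) \<Longrightarrow> x i = y i"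
  shows "hh I (insert i T) = hh I T"
  unfolding hh_def by (rule ent_cong) (use assms in \<open>auto simp: restr_eq\<close>)

lemma hh_full:
  assumes fin: "finite I" and ext: "I \<subseteq> extensional V"
  shows "hh I V = ln (real (card I))"
proof -
  have "inj_on (\<lambda>x. restrict x V) I"
  proof (rule inj_onI)
    fix x y assume "x \<in> I" "y \<in> I" "restrict x V = restrict y V"
    then show "x = y" using ext by (metis extensional_restrict subsetD)
  qed
  then show ?thesis unfolding hh_def by (rule ent_inj[OF fin])
qed

lemma hh_card:
  assumes fin: "finite I" and ne: "I \<noteq> {}" and q: "q > 0" and finS: "finite S"
    and bd: "\<And>x i. x \<in> I \<Longrightarrow> i \<in> S \<Longrightarrow> x i < q"
  shows "hh I S \<le> real (card S) * ln (real q)"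
proof -
  have img: "(\<lambda>x. restrict x S) ` I \<subseteq> PiE S (\<lambda>_. {0..<q})"
    using bd by (auto simp: PiE_def Pi_def)
  have "card ((\<lambda>x. restrict x S) ` I) \<le> card (PiE S (\<lambda>_. {0..<q}))"
    by (rule card_mono[OF _ img]) (simp add: finite_PiE finS)
  also have "\<dots> = q ^ card S" by (simp add: card_PiE finS)
  finally have c: "card ((\<lambda>x. restrict x S) ` I) \<le> q ^ card S" .
  have pos: "card ((\<lambda>x. restrict x S) ` I) > 0" using fin ne by (simp add: card_gt_0_iff)
  have "hh I S \<le> ln (real (card ((\<lambda>x. restrict x S) ` I)))"
    unfolding hh_def by (rule ent_le_card[OF fin ne])
  also have "\<dots> \<le> ln (real (q ^ card S))"
    using c pos q by (subst ln_le_cancel_iff) auto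
  also have "\<dots> = real (card S) * ln (real q)" using q by (simp add: ln_realpow)
  finally show ?thesis .
qed


lemma core_bound:
  fixes I :: "(nat \<Rightarrow> nat) set" and k q :: nat
  assumes k: "1 \<le> k" and fin: "finite I" and ne: "I \<noteq> {}" and q: "0 < q"
    and sub: "I \<subseteq> {0..<2*k+1} \<rightarrow>\<^sub>E {0..<q}"
    and indep: "\<And>s x y. s < 2*k+1 \<Longrightarrow> x \<in> I \<Longrightarrow> y \<in> I \<Longrightarrow>
       (\<And>j. j < 2*k+1 \<Longrightarrow> j \<noteq> s \<Longrightarrow> j \<noteq> (s+k) mod (2*k+1) \<Longrightarrow> j \<noteq> (s+k+1) mod (2*k+1) \<Longrightarrow> x j = y j)
       \<Longrightarrow> x s = y s"
  shows "real k * ln (real (card I)) \<le> (real k * (2 * real k - 2) + real k - 1) * ln (real q)"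
proof -
  define m where "m = 2*k+1"
  define V where "V = {0..<m}"
  define L where "L = ln (real q)"
  define H where "H = hh I V"
  define f where "f R = hh I (V - R)" for R
  have L0: "L \<ge> 0" using q by (simp add: L_def)
  have bd: "x i < q" if "x \<in> I" "i \<in> S" "S \<subseteq> V" for x i S
  proof -
    have "x \<in> {0..<2*k+1} \<rightarrow>\<^sub>E {0..<q}" using that sub by auto
    moreover have "i \<in> {0..<2*k+1}" using that by (auto simp: V_def m_def)
    ultimately show ?thesis using PiE_mem by fastforce
  qed
  have Hc: "H = ln (real (card I))"
    unfolding H_def by (rule hh_full[OF fin]) (use sub in \<open>auto simp: V_def m_def PiE_def\<close>)
  have card_bd: "hh I S \<le> real (card S) * L" if "S \<subseteq> V" for S
    unfolding L_def by (rule hh_card[OF fin ne q]) (use that bd in \<open>auto simp: V_def intro: finite_subset\<close>)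
  have decx: "hh I (insert s T) = hh I T"
    if s: "s < m" and T: "\<And>j. j < m \<Longrightarrow> j \<noteq> s \<Longrightarrow> j \<noteq> (s+k) mod m \<Longrightarrow> j \<noteq> (s+k+1) mod m \<Longrightarrow> j \<in> T" for s T
  proof (rule hh_dec)
    fix x y assume x: "x \<in> I" and y: "y \<in> I" and agree: "\<forall>j\<in>T. x j = y j"
    show "x s = y s"
      by (rule indep[OF s[unfolded m_def] x y]) (use T agree in \<open>auto simp: m_def\<close>)
  qed
  have F4: "f {r..r} = H" if r: "r < m" for r
  proof -
    have "V = insert r (V - {r})" using r by (auto simp: V_def)
    then have "H = hh I (insert r (V - {r}))" by (simp add: H_def)
    also have "\<dots> = hh I (V - {r})" by (rule decx[OF r]) (auto simp: V_def)
    finally show ?thesis by (simp add: f_def)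
  qed
  have F5: "f {r..r+1} \<le> real (m - 3) * L" if r: "r < k" for r
  proof -
    define t where "t = r + k + 1"
    have t: "t < m" using r by (simp add: t_def m_def)
    have rm: "r + 1 < m" using r by (simp add: m_def)
    have t1: "(t + k) mod m = r"
    proof -
      have "t + k = r + m" by (simp add: t_def m_def)
      then have "(t + k) mod m = (r + m) mod m" by simp
      also have "\<dots> = r" using rm by simp
      finally show ?thesis .
    qed
    have t2: "(t + k + 1) mod m = r + 1"
    proof -
      have "t + k + 1 = (r + 1) + m" by (simp add: t_def m_def)
      then have "(t + k + 1) mod m = ((r + 1) + m) mod m" by simp
      also have "\<dots> = r + 1" using rm by (metis mod_add_self2 mod_less)
      finally show ?thesis .
    qed
    have e: "V - {r..r+1} = insert t (V - {r, r+1, t})" using r t by (auto simp: V_def t_def)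
    have "f {r..r+1} = hh I (V - {r, r+1, t})"
      unfolding f_def e by (rule decx[OF t]) (use t1 t2 in \<open>auto simp: V_def\<close>)
    also have "\<dots> \<le> real (card (V - {r, r+1, t})) * L" by (rule card_bd) auto
    also have "card (V - {r, r+1, t}) = m - 3"
    proof -
      have "{r, r+1, t} \<subseteq> V" using r t by (auto simp: V_def m_def)
      moreover have "card {r, r+1, t} = 3" using r by (auto simp: t_def)
      ultimately show ?thesis by (simp add: card_Diff_subset V_def)
    qed
    finally show ?thesis .
  qed
  have F1: "f {a..b+1} + f {a+1..b} \<le> f {a..b} + f {a+1..b+1}" if "a \<le> b" "b + 1 < m" for a b
  proof -
    have "hh I ((V - {a..b}) \<union> (V - {a+1..b+1})) + hh I ((V - {a..b}) \<inter> (V - {a+1..b+1}))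
        \<le> hh I (V - {a..b}) + hh I (V - {a+1..b+1})" by (rule hh_submod[OF fin ne])
    moreover have "(V - {a..b}) \<union> (V - {a+1..b+1}) = V - {a+1..b}" using that by auto
    moreover have "(V - {a..b}) \<inter> (V - {a+1..b+1}) = V - {a..b+1}" using that by auto
    ultimately show ?thesis by (simp add: f_def)
  qed
  have F2: "\<forall>a. b - a = d \<longrightarrow> a \<le> b \<longrightarrow> b + 1 < m \<longrightarrow> f {a..b+1} - f {a..b} \<le> f {b..b+1} - f {b..b}" for b d
  proof (induction d)
    case 0
    show ?case
    proof (intro allI impI)
      fix a assume "b - a = 0" "a \<le> b"
      then have "a = b" by arith
      then show "f {a..b+1} - f {a..b} \<le> f {b..b+1} - f {b..b}" by simp
    qed
  next
    case (Suc d)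
    show ?case
    proof (intro allI impI)
      fix a assume d: "b - a = Suc d" and ab: "a \<le> b" and bm: "b + 1 < m"
      have d1: "b - (a+1) = d" "a + 1 \<le> b" using d by arith+
      have "f {a..b+1} - f {a..b} \<le> f {a+1..b+1} - f {a+1..b}" using F1[OF ab bm] by simp
      also have "f {a+1..b+1} - f {a+1..b} \<le> f {b..b+1} - f {b..b}"
        using Suc.IH d1 bm by blast
      finally show "f {a..b+1} - f {a..b} \<le> f {b..b+1} - f {b..b}" .
    qed
  qed
  have F3: "j \<le> k \<Longrightarrow> f {0..j} \<le> H + real j * (real (m - 3) * L - H)" for j
  proof (induction j)
    case 0 then show ?case using F4[of 0] by (simp add: m_def)
  next
    case (Suc j)
    have jm: "j + 1 < m" using Suc.prems by (simp add: m_def)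
    have "f {0..j+1} - f {0..j} \<le> f {j..j+1} - f {j..j}" using F2[of j j, rule_format, of 0] jm by simp
    also have "\<dots> \<le> real (m - 3) * L - H" using F5[of j] F4[of j] Suc.prems jm by simp
    finally show ?case using Suc.IH Suc.prems by (simp add: algebra_simps)
  qed
  have F6: "H - real (k - 1) * L \<le> f {0..k}"
  proof -
    have km: "k < m" "0 < m" using k by (auto simp: m_def)
    have "H = hh I (insert k (V - {k}))" using km by (simp add: H_def insert_absorb V_def)
    also have "\<dots> = hh I (V - {k})"
    proof (rule decx[OF km(1)])
      fix j assume "j < m" "j \<noteq> k" "j \<noteq> (k + k) mod m" "j \<noteq> (k + k + 1) mod m"
      then show "j \<in> V - {k}" by (simp add: V_def)
    qed
    also have "V - {k} = insert 0 (V - {0, k})" using km k by (auto simp: V_def)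
    also have "hh I (insert 0 (V - {0, k})) = hh I (V - {0, k})"
    proof (rule decx[OF km(2)])
      fix j assume "j < m" "j \<noteq> 0" "j \<noteq> (0 + k) mod m" "j \<noteq> (0 + k + 1) mod m"
      then show "j \<in> V - {0, k}" using km by (simp add: V_def)
    qed
    also have "V - {0, k} = (V - {0..k}) \<union> {1..<k}" using km by (auto simp: V_def)
    also have "hh I ((V - {0..k}) \<union> {1..<k}) \<le> hh I (V - {0..k}) + hh I {1..<k}"
      by (rule hh_sub[OF fin ne])
    also have "hh I {1..<k} \<le> real (k - 1) * L"
      using card_bd[of "{1..<k}"] km by (auto simp: V_def)
    finally show ?thesis by (simp add: f_def)
  qed
  have "H - real (k - 1) * L \<le> H + real k * (real (m - 3) * L - H)"
    using F6 F3[of k] by simp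
  moreover have "real (m - 3) = 2 * real k - 2" "real (k - 1) = real k - 1" using k by (auto simp: m_def)
  ultimately have "real k * H \<le> (real k * (2 * real k - 2) + real k - 1) * L"
    by (simp add: algebra_simps)
  then show ?thesis by (simp add: Hc L_def)
qed


definition walk :: "(nat \<Rightarrow> nat \<Rightarrow> bool) \<Rightarrow> nat \<Rightarrow> (nat \<Rightarrow> nat) \<Rightarrow> bool" where
  "walk R L w \<longleftrightarrow> (\<forall>i<L. R (w i) (w (Suc i)))"

lemma walk_append:
  assumes "walk R L1 w1" "walk R L2 w2" "w1 L1 = w2 0"
  shows "walk R (L1 + L2) (\<lambda>i. if i \<le> L1 then w1 i else w2 (i - L1))"
  unfolding walk_def
proof (intro allI impI)
  fix i assume i: "i < L1 + L2"
  show "R (if i \<le> L1 then w1 i else w2 (i - L1)) (if Suc i \<le> L1 then w1 (Suc i) else w2 (Suc i - L1))"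
  proof (cases "i < L1")
    case True then show ?thesis using assms(1) by (auto simp: walk_def)
  next
    case False
    then have "i - L1 < L2" "Suc i - L1 = Suc (i - L1)" using i by auto
    then show ?thesis using assms False by (cases "i = L1") (auto simp: walk_def)
  qed
qed

lemma walk_rev:
  assumes sym: "\<And>u v. R u v \<Longrightarrow> R v u" and w: "walk R L w"
  shows "walk R L (\<lambda>i. w (L - i))"
  unfolding walk_def
proof (intro allI impI)
  fix i assume i: "i < L"
  have "R (w (L - Suc i)) (w (Suc (L - Suc i)))" using w i by (auto simp: walk_def)
  moreover have "Suc (L - Suc i) = L - i" using i by simp
  ultimately show "R (w (L - i)) (w (L - Suc i))" using sym by simp
qed

lemma walk_shift:
  assumes "walk R L w" "a \<le> b" "b \<le> L"
  shows "walk R (b - a) (\<lambda>i. w (a + i))"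
  using assms by (auto simp: walk_def)

lemma walk_snoc:
  assumes "walk R L w" "R (w L) v"
  shows "walk R (Suc L) (w(Suc L := v))"
  using assms by (auto simp: walk_def less_Suc_eq)

lemma walk_in:
  assumes "walk R L w" "\<And>u v. R u v \<Longrightarrow> u \<in> V" "i < L"
  shows "w i \<in> V"
  using assms by (auto simp: walk_def)

definition reach :: "(nat \<Rightarrow> nat \<Rightarrow> bool) \<Rightarrow> nat \<Rightarrow> nat \<Rightarrow> bool" where
  "reach R x y \<longleftrightarrow> (\<exists>L w. walk R L w \<and> w 0 = x \<and> w L = y)"

lemma reach_refl: "reach R x x"
  unfolding reach_def by (rule exI[of _ 0], rule exI[of _ "\<lambda>_. x"]) (simp add: walk_def)

lemma reach_step:
  assumes "reach R x y" "R y z" shows "reach R x z"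
proof -
  obtain L w where w: "walk R L w" "w 0 = x" "w L = y" using assms(1) by (auto simp: reach_def)
  have "walk R (Suc L) (w(Suc L := z))" by (rule walk_snoc) (use w assms in auto)
  then show ?thesis unfolding reach_def using w by (intro exI[of _ "Suc L"] exI[of _ "w(Suc L := z)"]) auto
qed

lemma bipartite_or_odd:
  fixes R :: "nat \<Rightarrow> nat \<Rightarrow> bool"
  assumes sym: "\<And>u v. R u v \<Longrightarrow> R v u"
    and noodd: "\<And>L w. walk R L w \<Longrightarrow> w L = w 0 \<Longrightarrow> even L"
  shows "\<exists>A B. A \<union> B = V \<and> A \<inter> B = {} \<and> (\<forall>u\<in>V. \<forall>v\<in>V. R u v \<longrightarrow> (u \<in> A \<and> v \<in> B) \<or> (u \<in> B \<and> v \<in> A))"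
proof -
  define rt where "rt x = (LEAST r. reach R r x)" for x
  have rt_reach: "reach R (rt x) x" for x unfolding rt_def by (rule LeastI[of _ x]) (rule reach_refl)
  have rt_eq: "rt u = rt v" if "R u v" for u v
  proof -
    have "reach R r u \<longleftrightarrow> reach R r v" for r
      using reach_step[of R r u v] reach_step[of R r v u] that sym by blast
    then show ?thesis unfolding rt_def by simp
  qed
  define A where "A = {x\<in>V. \<exists>L w. walk R L w \<and> w 0 = rt x \<and> w L = x \<and> even L}"
  have key: "u \<in> A \<longleftrightarrow> v \<notin> A" if uv: "R u v" "u \<in> V" "v \<in> V" for u v
  proof
    assume "u \<in> A"
    then obtain L w where w: "walk R L w" "w 0 = rt u" "w L = u" "even L" by (auto simp: A_def)
    have w2: "walk R (Suc L) (w(Suc L := v))" by (rule walk_snoc) (use w uv in auto)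
    show "v \<notin> A"
    proof
      assume "v \<in> A"
      then obtain L' w' where w': "walk R L' w'" "w' 0 = rt v" "w' L' = v" "even L'" by (auto simp: A_def)
      have w3: "walk R L' (\<lambda>i. w' (L' - i))" by (rule walk_rev[OF sym w'(1)])
      let ?c = "\<lambda>i. if i \<le> L' then w' (L' - i) else (w(Suc L := v)) (i - L')"
      have "walk R (L' + Suc L) ?c"
        by (rule walk_append[OF w3 w2]) (use w w' rt_eq[OF uv(1)] in simp)
      moreover have "?c (L' + Suc L) = ?c 0" using w' by simp
      ultimately have "even (L' + Suc L)" by (rule noodd)
      then show False using w(4) w'(4) by simp
    qed
  next
    assume "v \<notin> A"
    obtain L w where w: "walk R L w" "w 0 = rt u" "w L = u" using rt_reach[of u] by (auto simp: reach_def)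
    have w2: "walk R (Suc L) (w(Suc L := v))" by (rule walk_snoc) (use w uv in auto)
    show "u \<in> A"
    proof (rule ccontr)
      assume "u \<notin> A"
      then have "odd L" using w uv by (auto simp: A_def)
      then have "v \<in> A" using w2 w rt_eq[OF uv(1)] uv unfolding A_def
        by (intro CollectI conjI exI[of _ "Suc L"] exI[of _ "w(Suc L := v)"]) auto
      then show False using \<open>v \<notin> A\<close> by simp
    qed
  qed
  show ?thesis
    by (rule exI[of _ A], rule exI[of _ "V - A"]) (use key in \<open>auto simp: A_def\<close>)
qed

lemma odd_walk_cycle:
  fixes R :: "nat \<Rightarrow> nat \<Rightarrow> bool"
  assumes irr: "\<And>u. \<not> R u u"
    and ex: "walk R L0 w0" "w0 L0 = w0 0" "odd L0"
  shows "\<exists>(k::nat) u. 1 \<le> k \<and> inj_on u {0..<2*k+1} \<and> (\<forall>i<2*k+1. R (u i) (u ((i+1) mod (2*k+1))))"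
proof -
  define P where "P L = (\<exists>w. walk R L w \<and> w L = w 0 \<and> odd L)" for L
  have P0: "P L0" using ex by (auto simp: P_def)
  define L where "L = (LEAST L. P L)"
  have PL: "P L" unfolding L_def by (rule LeastI[of P, OF P0])
  have minL: "\<not> P L'" if "L' < L" for L' using that not_less_Least unfolding L_def by blast
  obtain w where w: "walk R L w" "w L = w 0" "odd L" using PL by (auto simp: P_def)
  have L1: "L \<noteq> 1"
  proof
    assume "L = 1"
    then have "R (w 0) (w 1)" using w(1) by (auto simp: walk_def)
    then show False using w(2) \<open>L = 1\<close> irr by simp
  qed
  obtain k where k0: "L = 2*k+1" using w(3) oddE by blast
  have k: "L = 2*k+1" "1 \<le> k" using k0 L1 by auto
  have inj: "inj_on w {0..<L}"
  proof (rule inj_onI, rule ccontr)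
    fix a b assume a: "a \<in> {0..<L}" and b: "b \<in> {0..<L}" and eq: "w a = w b" and ne: "a \<noteq> b"
    have "\<exists>a b. a < b \<and> b < L \<and> w a = w b" using a b eq ne
      by (metis atLeastLessThan_iff linorder_neqE_nat)
    then obtain a b where ab: "a < b" "b < L" "w a = w b" by blast
    have w1: "walk R (b - a) (\<lambda>i. w (a + i))" by (rule walk_shift[OF w(1)]) (use ab in auto)
    have wA: "walk R (L - b) (\<lambda>i. w (b + i))" by (rule walk_shift[OF w(1)]) (use ab in auto)
    have wB: "walk R (a - 0) (\<lambda>i. w (0 + i))" by (rule walk_shift[OF w(1)]) (use ab in auto)
    let ?c = "\<lambda>i. if i \<le> L - b then w (b + i) else w (0 + (i - (L - b)))"
    have w2: "walk R ((L - b) + (a - 0)) ?c"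
      by (rule walk_append[OF wA wB]) (use ab w(2) in simp)
    have c1: "(\<lambda>i. w (a + i)) (b - a) = (\<lambda>i. w (a + i)) 0" using ab by simp
    have c2: "?c ((L - b) + (a - 0)) = ?c 0"
    proof (cases "a = 0")
      case True then show ?thesis using ab w(2) by simp
    next
      case False
      have n1: "\<not> ((L - b) + (a - 0) \<le> L - b)" using False by simp
      have n2: "(L - b) + (a - 0) - (L - b) = a" by simp
      show ?thesis using ab n1 n2 by (simp only: if_False if_True) simp
    qed
    have "odd (b - a) \<or> odd ((L - b) + (a - 0))"
    proof -
      have "(b - a) + ((L - b) + (a - 0)) = L" using ab by simp
      then show ?thesis using w(3) by (metis odd_add)
    qed
    then show False
    proof
      assume "odd (b - a)"
      then have "P (b - a)" using w1 c1 unfolding P_def by blast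
      moreover have "b - a < L" using ab by simp
      ultimately show False using minL by blast
    next
      assume "odd ((L - b) + (a - 0))"
      then have "P ((L - b) + (a - 0))" using w2 c2 unfolding P_def by blast
      moreover have "(L - b) + (a - 0) < L" using ab by simp
      ultimately show False using minL by blast
    qed
  qed
  have cyc: "R (w i) (w ((i+1) mod L))" if i: "i < L" for i
  proof (cases "i + 1 < L")
    case True then show ?thesis using w(1) i by (auto simp: walk_def)
  next
    case False
    then have "i + 1 = L" using i by simp
    then show ?thesis using w(1) w(2) i by (auto simp: walk_def)
  qed
  show ?thesis
    by (rule exI[of _ k], rule exI[of _ w]) (use k inj cyc in auto)
qed


lemma class_count:
  fixes n t m :: nat and E :: "nat \<Rightarrow> nat \<Rightarrow> bool" and P :: "nat set" and enc
    and w :: "nat \<Rightarrow> nat" and D :: "nat \<Rightarrow> nat set" and B :: real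
  assumes code: "is_index_code n E t P enc"
    and winj: "inj_on w {0..<m}" and wV: "w ` {0..<m} \<subseteq> {0..<n}"
    and D: "\<And>s s'. s < m \<Longrightarrow> s' < m \<Longrightarrow> E (w s) (w s') \<Longrightarrow> s' \<notin> D s"
    and Bnd: "\<And>J. J \<subseteq> {0..<m} \<rightarrow>\<^sub>E {0..<(2::nat)^t} \<Longrightarrow>
        (\<And>s x y. s < m \<Longrightarrow> x \<in> J \<Longrightarrow> y \<in> J \<Longrightarrow> (\<And>j. j < m \<Longrightarrow> j \<notin> D s \<Longrightarrow> x j = y j) \<Longrightarrow> x s = y s)
        \<Longrightarrow> real (card J) \<le> B"
  shows "real ((2^t)^m) \<le> real (card P) * B"
proof -
  obtain dec where dec: "\<And>x i. x \<in> msgs n t \<Longrightarrow> i < n \<Longrightarrow> dec i (enc x) (restrict x (nbrs n E i)) = x i"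
    and finP: "finite P" and encP: "enc ` msgs n t \<subseteq> P"
    using code unfolding is_index_code_def by blast
  define q :: nat where "q = 2^t"
  define Y where "Y = {0..<m} \<rightarrow>\<^sub>E {0..<q}"
  define W where "W = w ` {0..<m}"
  define iw where "iw = the_inv_into {0..<m} w"
  define \<Phi> where "\<Phi> y = (\<lambda>j. if j < n then (if j \<in> W then y (iw j) else 0) else undefined)" for y :: "nat \<Rightarrow> nat"
  have iw_w: "iw (w s) = s" if "s < m" for s
    unfolding iw_def using that winj by (simp add: the_inv_into_f_f)
  have iw_in: "iw j < m" if "j \<in> W" for j
    using that winj the_inv_into_into[of w "{0..<m}" j "{0..<m}"] unfolding iw_def W_def by auto
  have \<Phi>_msg: "\<Phi> y \<in> msgs n t" if y: "y \<in> Y" for y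
  proof -
    have "\<Phi> y j \<in> {0..<q}" if "j < n" for j
    proof (cases "j \<in> W")
      case True
      then have "iw j \<in> {0..<m}" using iw_in by simp
      then have "y (iw j) \<in> {0..<q}" using y by (auto simp: Y_def PiE_def Pi_def)
      then show ?thesis using True that by (simp add: \<Phi>_def)
    next
      case False then show ?thesis using that by (simp add: \<Phi>_def q_def)
    qed
    then show ?thesis unfolding msgs_def q_def[symmetric]
      by (auto simp: PiE_def Pi_def extensional_def \<Phi>_def)
  qed
  have \<Phi>_w: "\<Phi> y (w s) = y s" if "s < m" for y s
  proof -
    have "w s < n" "w s \<in> W" using that wV by (auto simp: W_def image_subset_iff)
    then show ?thesis using iw_w[OF that] by (simp add: \<Phi>_def)
  qed
  define J where "J p = {y\<in>Y. enc (\<Phi> y) = p}" for p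
  have Jind: "y s = y' s" if "s < m" "y \<in> J p" "y' \<in> J p" "\<And>j. j < m \<Longrightarrow> j \<notin> D s \<Longrightarrow> y j = y' j" for p s y y'
  proof -
    let ?N = "nbrs n E (w s)"
    have ws: "w s < n" using that(1) wV by (auto simp: image_subset_iff)
    have r: "restrict (\<Phi> y) ?N = restrict (\<Phi> y') ?N"
    proof (rule ext)
      fix j
      show "restrict (\<Phi> y) ?N j = restrict (\<Phi> y') ?N j"
      proof (cases "j \<in> ?N")
        case False then show ?thesis by simp
      next
        case True
        then have jn: "j < n" and Ej: "E (w s) j" by (auto simp: nbrs_def)
        show ?thesis
        proof (cases "j \<in> W")
          case True
          then obtain s' where s': "s' < m" "j = w s'" by (auto simp: W_def)
          have "s' \<notin> D s" using D[OF that(1) s'(1)] Ej s' by simp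
          then have "y s' = y' s'" using that(4) s' by simp
          then show ?thesis using \<Phi>_w s' \<open>j \<in> ?N\<close> by simp
        next
          case False then show ?thesis using jn \<open>j \<in> ?N\<close> by (simp add: \<Phi>_def)
        qed
      qed
    qed
    have e: "enc (\<Phi> y) = enc (\<Phi> y')" using that(2,3) by (simp add: J_def)
    have yY: "y \<in> Y" "y' \<in> Y" using that(2,3) by (auto simp: J_def)
    have "y s = \<Phi> y (w s)" using \<Phi>_w that(1) by simp
    also have "\<dots> = dec (w s) (enc (\<Phi> y)) (restrict (\<Phi> y) ?N)"
      using dec[OF \<Phi>_msg[OF yY(1)] ws] by simp
    also have "\<dots> = dec (w s) (enc (\<Phi> y')) (restrict (\<Phi> y') ?N)" using e r by simp
    also have "\<dots> = \<Phi> y' (w s)" using dec[OF \<Phi>_msg[OF yY(2)] ws] by simp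
    also have "\<dots> = y' s" using \<Phi>_w that(1) by simp
    finally show ?thesis .
  qed
  have Jb: "real (card (J p)) \<le> B" for p
  proof (rule Bnd[of "J p"])
    show "J p \<subseteq> {0..<m} \<rightarrow>\<^sub>E {0..<2^t}" by (auto simp: J_def Y_def q_def)
  next
    fix s x y assume "s < m" "x \<in> J p" "y \<in> J p" "\<And>j. j < m \<Longrightarrow> j \<notin> D s \<Longrightarrow> x j = y j"
    then show "x s = y s" by (rule Jind)
  qed
  have finY: "finite Y" by (simp add: Y_def finite_PiE)
  have "Y \<subseteq> (\<Union>p\<in>P. J p)" using encP \<Phi>_msg by (auto simp: J_def)
  then have "card Y \<le> card (\<Union>p\<in>P. J p)"
    by (rule card_mono[rotated]) (use finP finY in \<open>auto simp: J_def\<close>)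
  also have "\<dots> \<le> (\<Sum>p\<in>P. card (J p))" by (rule card_UN_le[OF finP])
  finally have "real (card Y) \<le> (\<Sum>p\<in>P. real (card (J p)))" by (simp flip: of_nat_sum)
  also have "\<dots> \<le> (\<Sum>p\<in>P. B)" by (rule sum_mono) (rule Jb)
  also have "\<dots> = real (card P) * B" by simp
  finally show ?thesis by (simp add: Y_def card_PiE q_def)
qed

lemma double_mod_inj:
  fixes k s s' :: nat
  assumes "(2*s) mod (2*k+1) = (2*s') mod (2*k+1)" "s < 2*k+1" "s' < 2*k+1"
  shows "s = s'"
proof -
  define m where "m = 2*k+1"
  have e: "((k+1)*(2*x)) mod m = x" if "x < m" for x
  proof -
    have eq: "(k+1)*(2*x) = x + x * m" by (simp add: m_def algebra_simps)
    have "((k+1)*(2*x)) mod m = (x + x * m) mod m" by (simp only: eq)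
    also have "\<dots> = x mod m" by (rule mod_mult_self1)
    also have "\<dots> = x" using that by simp
    finally show ?thesis .
  qed
  have "s = ((k+1)*(2*s)) mod m" using e assms(2) by (simp add: m_def)
  also have "\<dots> = ((k+1)*((2*s) mod m)) mod m" by (rule mod_mult_right_eq[symmetric])
  also have "\<dots> = ((k+1)*((2*s') mod m)) mod m" using assms(1) by (simp add: m_def)
  also have "\<dots> = ((k+1)*(2*s')) mod m" by (rule mod_mult_right_eq)
  also have "\<dots> = s'" using e assms(3) by (simp add: m_def)
  finally show ?thesis .
qed

lemma odd_P_bound:
  fixes n t k :: nat and E :: "nat \<Rightarrow> nat \<Rightarrow> bool" and P :: "nat set" and enc and u :: "nat \<Rightarrow> nat"
  assumes code: "is_index_code n E t P enc" and k: "1 \<le> k"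
    and sym: "\<And>i j. i < n \<Longrightarrow> j < n \<Longrightarrow> E i j \<longleftrightarrow> E j i"
    and irrefl: "\<And>i. i < n \<Longrightarrow> \<not> E i i"
    and uinj: "inj_on u {0..<2*k+1}" and uV: "u ` {0..<2*k+1} \<subseteq> {0..<n}"
    and cyc: "\<And>i. i < 2*k+1 \<Longrightarrow> compl_graph E (u i) (u ((i+1) mod (2*k+1)))"
  shows "real t * (2 + 1 / real k) \<le> log 2 (real (card P))"
proof -
  define m where "m = 2*k+1"
  define w where "w s = u ((2*s) mod m)" for s
  define q :: nat where "q = 2^t"
  define C :: real where "C = real k * (2 * real k - 2) + real k - 1"
  define D where "D s = {s, (s+k) mod m, (s+k+1) mod m}" for s
  have m0: "0 < m" by (simp add: m_def)
  have q0: "0 < q" by (simp add: q_def)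
  have uV': "u i < n" if "i < m" for i using uV that by (auto simp: m_def image_subset_iff)
  have wV: "w ` {0..<m} \<subseteq> {0..<n}" using uV' m0 by (auto simp: w_def)
  have winj: "inj_on w {0..<m}"
  proof (rule inj_onI)
    fix s s' assume s: "s \<in> {0..<m}" and s': "s' \<in> {0..<m}" and e: "w s = w s'"
    have "(2*s) mod m < m" "(2*s') mod m < m" using m0 by auto
    then have "(2*s) mod m = (2*s') mod m" using e uinj unfolding w_def m_def inj_on_def by auto
    then show "s = s'" using double_mod_inj[of s k s'] s s' by (simp add: m_def)
  qed
  have nE: "\<not> E (u i) (u ((i+1) mod m)) \<and> \<not> E (u ((i+1) mod m)) (u i)" if "i < m" for i
  proof -
    have c: "compl_graph E (u i) (u ((i+1) mod m))" using cyc that by (simp add: m_def)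
    have "(i+1) mod m < m" using m0 by simp
    then show ?thesis using c sym uV' that by (auto simp: compl_graph_def)
  qed
  have DE: "s' \<notin> D s" if s: "s < m" and s': "s' < m" and E: "E (w s) (w s')" for s s'
  proof
    assume "s' \<in> D s"
    then consider "s' = s" | "s' = (s+k) mod m" | "s' = (s+k+1) mod m" by (auto simp: D_def)
    then show False
    proof cases
      case 1 then show False using E irrefl uV' m0 by (simp add: w_def)
    next
      case 2
      define i where "i = (2*s') mod m"
      have i: "i < m" using m0 by (simp add: i_def)
      have "i = (2*(s+k)) mod m" unfolding i_def 2 by (simp add: mod_mult_right_eq)
      then have "(i+1) mod m = (2*(s+k)+1) mod m" by (simp add: mod_Suc_eq)
      also have "2*(s+k)+1 = 2*s + m" by (simp add: m_def)
      also have "(2*s + m) mod m = (2*s) mod m" by simp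
      finally have "(i+1) mod m = (2*s) mod m" .
      then show False using nE[OF i] E by (simp add: w_def i_def)
    next
      case 3
      define i where "i = (2*s) mod m"
      have i: "i < m" using m0 by (simp add: i_def)
      have "(2*s') mod m = (2*(s+k+1)) mod m" unfolding 3 by (simp add: mod_mult_right_eq)
      also have "2*(s+k+1) = (2*s+1) + m" by (simp add: m_def)
      also have "((2*s+1) + m) mod m = (2*s+1) mod m" by (rule mod_add_self2)
      also have "\<dots> = (i+1) mod m" by (simp add: i_def mod_Suc_eq)
      finally have "(2*s') mod m = (i+1) mod m" .
      then show False using nE[OF i] E by (simp add: w_def i_def)
    qed
  qed
  have Bnd: "real (card J) \<le> real q powr (C / real k)"
    if J: "J \<subseteq> {0..<m} \<rightarrow>\<^sub>E {0..<(2::nat)^t}"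
      and ind: "\<And>s x y. s < m \<Longrightarrow> x \<in> J \<Longrightarrow> y \<in> J \<Longrightarrow> (\<And>j. j < m \<Longrightarrow> j \<notin> D s \<Longrightarrow> x j = y j) \<Longrightarrow> x s = y s"
    for J
  proof (cases "J = {}")
    case True then show ?thesis by simp
  next
    case False
    have finJ: "finite J" using J by (rule finite_subset) (simp add: finite_PiE)
    have "real k * ln (real (card J)) \<le> C * ln (real q)"
      unfolding C_def
    proof (rule core_bound[OF k finJ False q0])
      show "J \<subseteq> {0..<2*k+1} \<rightarrow>\<^sub>E {0..<q}" using J by (simp add: m_def q_def)
    next
      fix s x y assume "s < 2*k+1" "x \<in> J" "y \<in> J"
        and ag: "\<And>j. j < 2*k+1 \<Longrightarrow> j \<noteq> s \<Longrightarrow> j \<noteq> (s+k) mod (2*k+1) \<Longrightarrow> j \<noteq> (s+k+1) mod (2*k+1) \<Longrightarrow> x j = y j"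
      show "x s = y s"
      proof (rule ind[of s x y])
        show "s < m" using \<open>s < 2*k+1\<close> by (simp add: m_def)
        show "x \<in> J" "y \<in> J" by fact+
        fix j assume j: "j < m" "j \<notin> D s"
        show "x j = y j" by (rule ag) (use j in \<open>simp_all add: D_def m_def\<close>)
      qed
    qed
    then have "ln (real (card J)) \<le> (C * ln (real q)) / real k"
      using k by (simp add: pos_le_divide_eq mult.commute)
    also have "\<dots> = ln (real q powr (C / real k))" by simp
    finally have "ln (real (card J)) \<le> ln (real q powr (C / real k))" .
    moreover have "real (card J) > 0" using finJ False by (simp add: card_gt_0_iff)
    moreover have "real q powr (C / real k) > 0" using q0 by simp
    ultimately show ?thesis by (metis ln_le_cancel_iff)
  qed
  have main0: "real (((2::nat)^t)^m) \<le> real (card P) * (real q powr (C / real k))"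
  proof (rule class_count[OF code winj wV, where D = D and B = "real q powr (C / real k)"])
    fix s s' assume "s < m" "s' < m" "E (w s) (w s')"
    then show "s' \<notin> D s" by (rule DE)
  next
    fix J :: "(nat \<Rightarrow> nat) set"
    assume "J \<subseteq> {0..<m} \<rightarrow>\<^sub>E {0..<(2::nat)^t}"
      "\<And>s x y. s < m \<Longrightarrow> x \<in> J \<Longrightarrow> y \<in> J \<Longrightarrow> (\<And>j. j < m \<Longrightarrow> j \<notin> D s \<Longrightarrow> x j = y j) \<Longrightarrow> x s = y s"
    then show "real (card J) \<le> real q powr (C / real k)" by (rule Bnd)
  qed
  then have main: "real (q^m) \<le> real (card P) * real q powr (C / real k)" by (simp add: q_def)
  have Ppos: "real (card P) > 0"
  proof -
    have "real (q^m) > 0" using q0 by simp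
    show ?thesis
    proof (rule ccontr)
      assume "\<not> real (card P) > 0"
      then have "real (card P) = 0" by simp
      then have "real (q^m) \<le> 0" using main by (simp only: mult_zero_left)
      then show False using \<open>real (q^m) > 0\<close> by linarith
    qed
  qed
  have "ln (real (q^m)) \<le> ln (real (card P) * real q powr (C / real k))"
    using main q0 Ppos by (subst ln_le_cancel_iff) auto
  also have "\<dots> = ln (real (card P)) + (C / real k) * ln (real q)"
    using Ppos q0 by (simp add: ln_mult_pos)
  finally have A: "real m * ln (real q) - (C / real k) * ln (real q) \<le> ln (real (card P))"
    by (simp add: ln_realpow)
  have B: "real m * ln (real q) - (C / real k) * ln (real q) = (real m - C / real k) * ln (real q)"
    by (simp add: left_diff_distrib)
  have C1: "real m - C / real k = 2 + 1 / real k"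
    using k by (simp add: m_def C_def field_simps)
  have C2: "ln (real q) = real t * ln 2" by (simp add: q_def ln_realpow)
  have "(real m - C / real k) * ln (real q) \<le> ln (real (card P))" using A by (simp only: B)
  then have "(2 + 1 / real k) * ln (real q) \<le> ln (real (card P))" by (simp only: C1)
  then have "(2 + 1 / real k) * (real t * ln 2) \<le> ln (real (card P))" by (simp only: C2)
  then show ?thesis by (simp add: log_def field_simps)
qed

lemma edge_P_bound:
  fixes n t :: nat and E :: "nat \<Rightarrow> nat \<Rightarrow> bool" and P :: "nat set" and enc
  assumes code: "is_index_code n E t P enc"
    and sym: "\<And>i j. i < n \<Longrightarrow> j < n \<Longrightarrow> E i j \<longleftrightarrow> E j i"
    and irrefl: "\<And>i. i < n \<Longrightarrow> \<not> E i i"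
    and ab: "a < n" "b < n" "compl_graph E a b"
  shows "real t * 2 \<le> log 2 (real (card P))"
proof -
  define w where "w s = (if s = 0 then a else b)" for s :: nat
  define q :: nat where "q = 2^t"
  have q0: "0 < q" by (simp add: q_def)
  have abne: "a \<noteq> b" "\<not> E a b" "\<not> E b a" using ab sym by (auto simp: compl_graph_def)
  have winj: "inj_on w {0..<2}" using abne by (auto simp: inj_on_def w_def)
  have wV: "w ` {0..<2} \<subseteq> {0..<n}" using ab by (auto simp: w_def)
  have DE: "s' \<notin> {0,1}" if "s < 2" "s' < 2" "E (w s) (w s')" for s s'
    using that abne irrefl ab by (auto simp: w_def less_2_cases_iff)
  have Bnd: "real (card J) \<le> 1"
    if J: "J \<subseteq> {0..<(2::nat)} \<rightarrow>\<^sub>E {0..<(2::nat)^t}"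
      and ind: "\<And>s x y. s < 2 \<Longrightarrow> x \<in> J \<Longrightarrow> y \<in> J \<Longrightarrow> (\<And>j. j < 2 \<Longrightarrow> j \<notin> {0,1} \<Longrightarrow> x j = y j) \<Longrightarrow> x s = y s"
    for J
  proof -
    have finJ: "finite J" using J by (rule finite_subset) (simp add: finite_PiE)
    have "x = y" if x: "x \<in> J" and y: "y \<in> J" for x y
    proof -
      have "x s = y s" if "s < 2" for s using ind[OF that x y] by auto
      moreover have "x \<in> extensional {0..<2}" "y \<in> extensional {0..<2}" using x y J by (auto simp: PiE_def)
      ultimately show "x = y" by (intro extensionalityI[of x "{0..<2}" y]) auto
    qed
    then have "card J \<le> Suc 0" using card_le_Suc0_iff_eq[OF finJ] by blast
    then show ?thesis by simp
  qed
  have main: "real (q^2) \<le> real (card P) * 1"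
    unfolding q_def
    by (rule class_count[OF code winj wV, of "\<lambda>_. {0,1}"]) (use DE Bnd in auto)
  then have "real q ^ 2 \<le> real (card P)" by simp
  moreover have q2: "0 < real q ^ 2" using q0 by simp
  ultimately have Pp: "0 < real (card P)" by linarith
  have "ln (real q ^ 2) \<le> ln (real (card P))" using q2 Pp \<open>real q ^ 2 \<le> real (card P)\<close> by (subst ln_le_cancel_iff) auto
  then have "2 * (real t * ln 2) \<le> ln (real (card P))" by (simp add: q_def ln_realpow)
  then show ?thesis by (simp add: log_def field_simps)
qed

lemma code_exists: "\<exists>P enc. is_index_code n E t P enc"
proof -
  define M where "M = msgs n t"
  have finM: "finite M" by (simp add: M_def msgs_def finite_PiE)
  define enc where "enc = to_nat_on M"
  have inj: "inj_on enc M" unfolding enc_def by (rule inj_on_to_nat_on) (rule countable_finite[OF finM])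
  define dec where "dec i p (s :: nat \<Rightarrow> nat) = the_inv_into M enc p i" for i :: nat and p :: nat and s
  have "is_index_code n E t (enc ` M) enc"
    unfolding is_index_code_def
  proof (intro conjI)
    show "finite (enc ` M)" using finM by simp
    show "enc ` msgs n t \<subseteq> enc ` M" by (simp add: M_def)
    show "\<exists>dec. \<forall>x\<in>msgs n t. \<forall>i<n. dec i (enc x) (restrict x (nbrs n E i)) = x i"
      by (rule exI[of _ dec]) (auto simp: dec_def M_def the_inv_into_f_f[OF inj[unfolded M_def]])
  qed
  then show ?thesis by blast
qed

lemma beta_t_ge:
  assumes "\<And>P enc. is_index_code n E t P enc \<Longrightarrow> X \<le> log 2 (real (card P))"
  shows "X \<le> real (beta_t n E t)"
proof -
  have ex: "\<exists>k P enc. is_index_code n E t P enc \<and> k = nat \<lceil>log 2 (real (card P))\<rceil>"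
    using code_exists by blast
  obtain P enc where c: "is_index_code n E t P enc" and e: "beta_t n E t = nat \<lceil>log 2 (real (card P))\<rceil>"
    using LeastI_ex[OF ex] unfolding beta_t_def by blast
  have "X \<le> log 2 (real (card P))" using assms[OF c] .
  also have "\<dots> \<le> real (nat \<lceil>log 2 (real (card P))\<rceil>)" by (rule real_nat_ceiling_ge)
  finally show ?thesis using e by simp
qed

lemma beta_t_le:
  assumes "is_index_code n E t P enc"
  shows "beta_t n E t \<le> nat \<lceil>log 2 (real (card P))\<rceil>"
  unfolding beta_t_def by (rule Least_le) (use assms in blast)


lemma bip_code:
  fixes n t :: nat and E :: "nat \<Rightarrow> nat \<Rightarrow> bool"
  assumes bip: "bipartite_on {0..<n} (compl_graph E)"
  shows "\<exists>P enc. is_index_code n E t P enc \<and> card P = 2^(2*t)"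
proof -
  obtain A B where AB: "A \<union> B = {0..<n}" "A \<inter> B = {}"
    and cross: "\<forall>u\<in>{0..<n}. \<forall>v\<in>{0..<n}. compl_graph E u v \<longrightarrow> (u \<in> A \<and> v \<in> B) \<or> (u \<in> B \<and> v \<in> A)"
    using bip unfolding bipartite_on_def by blast
  have AV: "A \<subseteq> {0..<n}" "B \<subseteq> {0..<n}" using AB(1) by auto
  have cliq: "E u v" if "u \<in> C" "v \<in> C" "u \<noteq> v" "C = A \<or> C = B" for u v C
  proof (rule ccontr)
    assume "\<not> E u v"
    then have "compl_graph E u v" using that(3) by (simp add: compl_graph_def)
    moreover have "u < n" "v < n" using that AV by auto
    ultimately have "(u \<in> A \<and> v \<in> B) \<or> (u \<in> B \<and> v \<in> A)" using cross by auto
    then show False using that AB(2) by auto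
  qed
  have finA: "finite A" "finite B" using AV by (auto intro: finite_subset)
  define q :: nat where "q = 2^t"
  have q0: "0 < q" by (simp add: q_def)
  define enc where "enc x = ((\<Sum>j\<in>A. x j) mod q) * q + (\<Sum>j\<in>B. x j) mod q" for x :: "nat \<Rightarrow> nat"
  define P where "P = {0..<q*q}"
  define dec where "dec i p s = (if i \<in> A then nat ((int (p div q) - (\<Sum>j\<in>A-{i}. int (s j))) mod int q)
      else nat ((int (p mod q) - (\<Sum>j\<in>B-{i}. int (s j))) mod int q))" for i p and s :: "nat \<Rightarrow> nat"
  have encP: "enc x \<in> P" for x
  proof -
    have a: "(\<Sum>j\<in>A. x j) mod q < q" "(\<Sum>j\<in>B. x j) mod q < q" using q0 by auto
    have "((\<Sum>j\<in>A. x j) mod q) * q + (\<Sum>j\<in>B. x j) mod q < ((\<Sum>j\<in>A. x j) mod q) * q + q" using a by simp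
    also have "\<dots> = ((\<Sum>j\<in>A. x j) mod q + 1) * q" by (simp add: algebra_simps)
    also have "\<dots> \<le> q * q"
    proof -
      have "(\<Sum>j\<in>A. x j) mod q + 1 \<le> q" using a(1) by simp
      then show ?thesis by (rule mult_right_mono) simp
    qed
    finally show ?thesis by (simp add: enc_def P_def)
  qed
  have divq: "enc x div q = (\<Sum>j\<in>A. x j) mod q" for x
    using q0 by (simp add: enc_def)
  have modq: "enc x mod q = (\<Sum>j\<in>B. x j) mod q" for x
    using q0 by (simp add: enc_def)
  have recover: "nat ((int (S mod q) - (\<Sum>j\<in>C-{i}. int (s j))) mod int q) = x i"
    if C: "finite C" "i \<in> C" and S: "S = (\<Sum>j\<in>C. x j)" and sx: "\<And>j. j \<in> C - {i} \<Longrightarrow> s j = x j"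
      and xi: "x i < q" for C i S s x
  proof -
    have "(\<Sum>j\<in>C-{i}. int (s j)) = (\<Sum>j\<in>C-{i}. int (x j))" using sx by simp
    moreover have "int S = int (x i) + (\<Sum>j\<in>C-{i}. int (x j))"
      unfolding S using C by (simp add: sum.remove)
    ultimately have "(int (S mod q) - (\<Sum>j\<in>C-{i}. int (s j))) mod int q = (int S - (\<Sum>j\<in>C-{i}. int (x j))) mod int q"
      by (simp add: of_nat_mod mod_diff_left_eq)
    also have "\<dots> = int (x i) mod int q" using \<open>int S = _\<close> by simp
    also have "\<dots> = int (x i)" using xi by simp
    finally show ?thesis by simp
  qed
  have code: "is_index_code n E t P enc"
    unfolding is_index_code_def
  proof (intro conjI)
    show "finite P" by (simp add: P_def)
    show "enc ` msgs n t \<subseteq> P" using encP by auto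
    show "\<exists>dec. \<forall>x\<in>msgs n t. \<forall>i<n. dec i (enc x) (restrict x (nbrs n E i)) = x i"
    proof (intro exI[of _ dec] ballI allI impI)
      fix x i assume x: "x \<in> msgs n t" and i: "i < n"
      have xi: "x i < q" using x i by (auto simp: msgs_def q_def PiE_def Pi_def)
      show "dec i (enc x) (restrict x (nbrs n E i)) = x i"
      proof (cases "i \<in> A")
        case True
        have "nat ((int ((\<Sum>j\<in>A. x j) mod q) - (\<Sum>j\<in>A-{i}. int (restrict x (nbrs n E i) j))) mod int q) = x i"
        proof (rule recover[of A i "\<Sum>j\<in>A. x j" x "restrict x (nbrs n E i)", OF finA(1) True refl _ xi])
          fix j assume "j \<in> A - {i}"
          then have "j \<in> nbrs n E i" using cliq[of i A j] True AV by (auto simp: nbrs_def)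
          then show "restrict x (nbrs n E i) j = x j" by simp
        qed
        then show ?thesis using True by (simp add: dec_def divq)
      next
        case False
        have "i \<in> A \<union> B" using AB(1) i by simp
        then have iB: "i \<in> B" using False by simp
        have "nat ((int ((\<Sum>j\<in>B. x j) mod q) - (\<Sum>j\<in>B-{i}. int (restrict x (nbrs n E i) j))) mod int q) = x i"
        proof (rule recover[of B i "\<Sum>j\<in>B. x j" x "restrict x (nbrs n E i)", OF finA(2) iB refl _ xi])
          fix j assume "j \<in> B - {i}"
          then have "j \<in> nbrs n E i" using cliq[of i B j] iB AV by (auto simp: nbrs_def)
          then show "restrict x (nbrs n E i) j = x j" by simp
        qed
        then show ?thesis using False by (simp add: dec_def modq)
      qed
    qed
  qed
  moreover have "card P = 2^(2*t)" by (simp add: P_def q_def power_mult_distrib flip: power_add mult_2)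
  ultimately show ?thesis by blast
qed

theorem corollary3p6:
  fixes n :: nat and E :: "nat \<Rightarrow> nat \<Rightarrow> bool"
  assumes sym: "\<And>i j. i < n \<Longrightarrow> j < n \<Longrightarrow> E i j \<longleftrightarrow> E j i"
    and irrefl: "\<And>i. i < n \<Longrightarrow> \<not> E i i"
    and compl_nonempty: "\<exists>i<n. \<exists>j<n. compl_graph E i j"
  shows "beta n E = 2 \<longleftrightarrow> bipartite_on {0..<n} (compl_graph E)"
proof -
  obtain a b where ab: "a < n" "b < n" "compl_graph E a b" using compl_nonempty by blast
  define r where "r t = real (beta_t n E t) / real t" for t
  have beta_eq: "beta n E = (INF t\<in>{1..}. r t)" by (simp add: beta_def r_def)
  have low: "real t * 2 \<le> real (beta_t n E t)" for t
    by (rule beta_t_ge) (rule edge_P_bound[OF _ sym irrefl ab])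
  have ne: "{1::nat..} \<noteq> {}" by auto
  show ?thesis
  proof
    assume b2: "beta n E = 2"
    show "bipartite_on {0..<n} (compl_graph E)"
    proof (rule ccontr)
      assume nb: "\<not> bipartite_on {0..<n} (compl_graph E)"
      define R where "R u v = (u < n \<and> v < n \<and> compl_graph E u v)" for u v
      have Rsym: "R v u" if "R u v" for u v using that sym by (auto simp: R_def compl_graph_def)
      have Rirr: "\<not> R u u" for u by (simp add: R_def compl_graph_def)
      have "\<exists>L w. walk R L w \<and> w L = w 0 \<and> odd L"
      proof (rule ccontr)
        assume "\<not> (\<exists>L w. walk R L w \<and> w L = w 0 \<and> odd L)"
        then have noodd: "\<And>L w. walk R L w \<Longrightarrow> w L = w 0 \<Longrightarrow> even L" by blast
        have "\<exists>A B. A \<union> B = {0..<n} \<and> A \<inter> B = {} \<and>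
            (\<forall>u\<in>{0..<n}. \<forall>v\<in>{0..<n}. R u v \<longrightarrow> (u \<in> A \<and> v \<in> B) \<or> (u \<in> B \<and> v \<in> A))"
          by (rule bipartite_or_odd) (fact Rsym, fact noodd)
        then obtain A B where AB1: "A \<union> B = {0..<n}" and AB2: "A \<inter> B = {}"
          and AB3: "\<forall>u\<in>{0..<n}. \<forall>v\<in>{0..<n}. R u v \<longrightarrow> (u \<in> A \<and> v \<in> B) \<or> (u \<in> B \<and> v \<in> A)"
          by blast
        have "bipartite_on {0..<n} (compl_graph E)"
          unfolding bipartite_on_def
        proof (rule exI[of _ A], rule exI[of _ B], intro conjI)
          show "A \<union> B = {0..<n}" by (rule AB1)
          show "A \<inter> B = {}" by (rule AB2)
          show "\<forall>u\<in>{0..<n}. \<forall>v\<in>{0..<n}. compl_graph E u v \<longrightarrow> u \<in> A \<and> v \<in> B \<or> u \<in> B \<and> v \<in> A"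
            using AB3 unfolding R_def by simp
        qed
        then show False using nb by simp
      qed
      then obtain L w where w: "walk R L w" "w L = w 0" "odd L" by blast
      have "\<exists>(k::nat) u. 1 \<le> k \<and> inj_on u {0..<2*k+1} \<and> (\<forall>i<2*k+1. R (u i) (u ((i+1) mod (2*k+1))))"
        by (rule odd_walk_cycle[where R = R, OF Rirr w(1) w(2) w(3)])
      then obtain k :: nat and u where kk: "1 \<le> k \<and> inj_on u {0..<2*k+1} \<and> (\<forall>i<2*k+1. R (u i) (u ((i+1) mod (2*k+1))))"
        by (elim exE)
      then have k: "1 \<le> k" and uinj: "inj_on u {0..<2*k+1}"
        and cycR: "\<forall>i<2*k+1. R (u i) (u ((i+1) mod (2*k+1)))" by auto
      have uV: "u ` {0..<2*k+1} \<subseteq> {0..<n}" using cycR by (auto simp: R_def)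
      have cyc: "compl_graph E (u i) (u ((i+1) mod (2*k+1)))" if "i < 2*k+1" for i
        using cycR that by (simp add: R_def)
      have hi: "2 + 1 / real k \<le> r t" if t: "t \<in> {1..}" for t
      proof -
        have "real t * (2 + 1 / real k) \<le> real (beta_t n E t)"
          by (rule beta_t_ge) (rule odd_P_bound[OF _ k sym irrefl uinj uV cyc])
        moreover have "real t > 0" using t by simp
        ultimately show ?thesis by (simp add: r_def pos_le_divide_eq mult.commute)
      qed
      have "2 + 1 / real k \<le> beta n E"
        unfolding beta_eq by (rule cINF_greatest[OF ne hi])
      moreover have "1 / real k > 0" using k by simp
      ultimately show False using b2 by simp
    qed
  next
    assume bip: "bipartite_on {0..<n} (compl_graph E)"
    have r2: "r t = 2" if t: "t \<in> {1..}" for t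
    proof -
      obtain P enc where c: "is_index_code n E t P enc" and cP: "card P = 2^(2*t)"
        using bip_code[OF bip] by blast
      have "beta_t n E t \<le> nat \<lceil>log 2 (real (card P))\<rceil>" by (rule beta_t_le[OF c])
      also have "\<dots> = 2 * t"
      proof -
        have "log 2 (real (card P)) = real (2*t)" using cP by simp
        then show ?thesis by (simp only: ceiling_of_nat nat_int)
      qed
      finally have up: "real (beta_t n E t) \<le> real t * 2" by simp
      have "real (beta_t n E t) = real t * 2" using up low[of t] by simp
      moreover have "real t > 0" using t by simp
      ultimately show ?thesis by (simp add: r_def)
    qed
    have "r ` {1..} = {2}" using r2 ne by auto
    then show "beta n E = 2" unfolding beta_eq by simp
  qed
qed

end
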